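(* Let $q$ be a prime power, $\ell,\mu\ge1$, $\mathbf{w}\in\mathcal{W}(w,\ell,\mu)$ and let $u$ be an integer with $0\le u\le w$. Let $\mathbf{u}^*$ be any output of the following procedure $\mathrm{ucomp}_\mu(\mathbf{w},u)$: set $\mathbf{u}\leftarrow\mathbf{w}$ and repeat $w-u$ times: let $J_1=\{i:u_i>0\}$, $J_2=\{i\in J_1: w_i=\min_{j\in J_1}w_j\}$, $J_3=\{i\in J_2:u_i=\max_{j\in J_2}u_j\}$, choose any $h\in J_3$ and set $u_h\leftarrow u_h-1$; output $\mathbf{u}$. Then $\mathbf{u}^*\in\mathcal{W}(u,\ell,\mu)$ and $$\varphi'(\mathbf{u}^*,\mathbf{w})=\max_{\mathbf{u}\in\mathcal{W}(u,\ell,\mu)}\varphi'(\mathbf{u},\mathbf{w}),\qquad\text{where }\ \varphi'(\mathbf{u},\mathbf{w})\coloneqq\prod_{i=1}^{\ell}\Phi_\mu(u_i\subseteq w_i).$$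
   Context: Gaussian binomial: $\begin{bmatrix}a\\ b\end{bmatrix}_q=\prod_{i=0}^{b-1}\frac{q^{a-i}-1}{q^{b-i}-1}$. $\mathcal{W}(w,\ell,\mu)\coloneqq\{\mathbf{w}\in\{0,\dots,\mu\}^{\ell}:\sum_i w_i=w\}$. For integers $0\le a,b\le\mu$, $\Phi_\mu(a\subseteq b)\coloneqq\begin{bmatrix}b\\ a\end{bmatrix}_q/\begin{bmatrix}\mu\\ a\end{bmatrix}_q$ if $a\le b$ and $0$ if $a>b$ (the probability that a uniformly random $a$-dimensional subspace of $\mathbb{F}_q^\mu$ lies in a fixed $b$-dimensional subspace). *)

theory Defs
  imports Complex_Main "HOL-Computational_Algebra.Primes"
begin

definition gauss_binom :: "real \<Rightarrow> nat \<Rightarrow> nat \<Rightarrow> real" where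
  "gauss_binom q a b = (\<Prod>i<b. (q ^ (a - i) - 1) / (q ^ (b - i) - 1))"

definition Phi :: "real \<Rightarrow> nat \<Rightarrow> nat \<Rightarrow> nat \<Rightarrow> real" where
  "Phi q \<mu> a b = (if a \<le> b then gauss_binom q b a / gauss_binom q \<mu> a else 0)"

text \<open>Vectors of length l are functions nat => nat, zero outside {..<l}.\<close>
definition Wset :: "nat \<Rightarrow> nat \<Rightarrow> nat \<Rightarrow> (nat \<Rightarrow> nat) set" where
  "Wset w l \<mu> = {v. (\<forall>i<l. v i \<le> \<mu>) \<and> (\<forall>i\<ge>l. v i = 0) \<and> (\<Sum>i<l. v i) = w}"

definition phi' :: "real \<Rightarrow> nat \<Rightarrow> nat \<Rightarrow> (nat \<Rightarrow> nat) \<Rightarrow> (nat \<Rightarrow> nat) \<Rightarrow> real" where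
  "phi' q \<mu> l u wv = (\<Prod>i<l. Phi q \<mu> (u i) (wv i))"

definition ucomp_step :: "nat \<Rightarrow> (nat \<Rightarrow> nat) \<Rightarrow> (nat \<Rightarrow> nat) \<Rightarrow> (nat \<Rightarrow> nat) \<Rightarrow> bool" where
  "ucomp_step l wv u u' \<longleftrightarrow>
     (let J1 = {i. i < l \<and> u i > 0};
          J2 = {i \<in> J1. wv i = Min (wv ` J1)};
          J3 = {i \<in> J2. u i = Max (u ` J2)}
      in \<exists>h \<in> J3. u' = u(h := u h - 1))"

definition ucomp_output :: "nat \<Rightarrow> (nat \<Rightarrow> nat) \<Rightarrow> nat \<Rightarrow> nat \<Rightarrow> (nat \<Rightarrow> nat) \<Rightarrow> bool" where
  "ucomp_output l wv w u u' \<longleftrightarrow> (ucomp_step l wv ^^ (w - u)) wv u'"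

end

theory Submission
  imports Defs
begin


definition rr :: "real \<Rightarrow> nat \<Rightarrow> nat \<Rightarrow> nat \<Rightarrow> real" where
  "rr Q \<mu> a b = (Q^(b-a)-1)/(Q^(\<mu>-a)-1)"

lemma div_div_cancel: "c \<noteq> (0::real) \<Longrightarrow> (A/c)/(B/c) = A/B"
  by (cases "B = 0") (simp_all add: divide_divide_eq_left)

lemma pow_split:
  fixes Q :: real
  assumes "a \<le> b" "b \<le> \<mu>"
  shows "Q^(\<mu>-a) = Q^(b-a) * Q^(\<mu>-b)"
proof -
  have "\<mu> - a = (b - a) + (\<mu> - b)" using assms by simp
  then show ?thesis by (simp only: power_add)
qed

lemma gt1_mult: "(x::real) > 1 \<Longrightarrow> K \<ge> 1 \<Longrightarrow> x*K - 1 > 0"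
proof -
  assume "x > 1" "K \<ge> 1"
  then have "x \<le> x * K" using mult_left_mono[of 1 K x] by simp
  then show ?thesis using \<open>x > 1\<close> by linarith
qed

lemma frac_mono_h:
  fixes a b c d :: real
  assumes "0 < b" "0 < d" "a*d \<le> c*b"
  shows "a/b \<le> c/d"
proof -
  have "a/b = (a*d)/(b*d)" using assms by simp
  also have "\<dots> \<le> (c*b)/(b*d)" using assms by (intro divide_right_mono) auto
  also have "\<dots> = c/d" using assms by simp
  finally show ?thesis .
qed

lemma Phi_prod:
  assumes "Q > 1" "a \<le> b" "b \<le> \<mu>"
  shows "Phi Q \<mu> a b = (\<Prod>i<a. rr Q \<mu> i b)"
proof -
  have "(\<Prod>i<a. rr Q \<mu> i b) = (\<Prod>i<a. ((Q^(b-i)-1)/(Q^(a-i)-1)) / ((Q^(\<mu>-i)-1)/(Q^(a-i)-1)))"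
  proof (rule prod.cong)
    fix i assume "i \<in> {..<a}"
    then have "a - i \<ge> 1" by auto
    then have "Q^(a-i) > 1" using assms(1) by (simp add: one_less_power)
    then have c: "Q^(a-i) - 1 \<noteq> 0" by simp
    show "rr Q \<mu> i b = ((Q^(b-i)-1)/(Q^(a-i)-1)) / ((Q^(\<mu>-i)-1)/(Q^(a-i)-1))"
      unfolding rr_def by (rule div_div_cancel[OF c, symmetric])
  qed simp
  also have "\<dots> = gauss_binom Q b a / gauss_binom Q \<mu> a"
    unfolding gauss_binom_def by (rule prod_dividef)
  finally show ?thesis unfolding Phi_def using assms by simp
qed

lemma Phi_Suc:
  assumes "Q > 1" "a < b" "b \<le> \<mu>"
  shows "Phi Q \<mu> (Suc a) b = Phi Q \<mu> a b * rr Q \<mu> a b"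
  using assms by (simp add: Phi_prod)

lemma rr_nonneg: assumes "Q > 1" "a \<le> b" "b \<le> \<mu>" shows "rr Q \<mu> a b \<ge> 0"
proof -
  have "Q^(b-a) \<ge> 1" "Q^(\<mu>-a) \<ge> 1" using assms by (auto intro: one_le_power)
  then show ?thesis unfolding rr_def by simp
qed

lemma Phi_nonneg: assumes "Q > 1" "b \<le> \<mu>" shows "Phi Q \<mu> a b \<ge> 0"
proof (cases "a \<le> b")
  case True
  then show ?thesis using assms by (auto simp: Phi_prod intro!: prod_nonneg rr_nonneg)
qed (simp add: Phi_def)

lemma rr_mono:
  assumes "Q > 1" "a \<le> a'" "a' < b" "b \<le> \<mu>"
  shows "rr Q \<mu> a' b \<le> rr Q \<mu> a b"
proof -
  define x where "x = Q^(b-a')"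
  define y where "y = Q^(b-a)"
  define K where "K = Q^(\<mu>-b)"
  have e1: "Q^(\<mu>-a') = x*K" unfolding x_def K_def
    using assms by (intro pow_split) auto
  have e2: "Q^(\<mu>-a) = y*K" unfolding y_def K_def
    using assms by (intro pow_split) auto
  have x1: "x > 1" unfolding x_def using assms by (simp add: one_less_power)
  have xy: "x \<le> y" unfolding x_def y_def using assms by (intro power_increasing) auto
  have K1: "K \<ge> 1" unfolding K_def using assms by (simp add: one_le_power)
  have "(y-x)*(K-1) \<ge> 0" using xy K1 by simp
  then have "(x-1)*(y*K-1) \<le> (y-1)*(x*K-1)" by (simp add: algebra_simps)
  moreover have "x*K - 1 > 0" "y*K-1 > 0" using x1 xy K1
    using gt1_mult[OF x1 K1] gt1_mult[of y K] x1 xy K1 by auto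
  ultimately show ?thesis unfolding rr_def e1 e2 x_def[symmetric] y_def[symmetric]
    by (intro frac_mono_h) (auto simp: mult.commute)
qed

lemma rr_upper:
  assumes "Q > 1" "a < b" "b \<le> \<mu>"
  shows "rr Q \<mu> a b * Q^(\<mu>-b) \<le> 1"
proof -
  define x where "x = Q^(b-a)"
  define K where "K = Q^(\<mu>-b)"
  have e2: "Q^(\<mu>-a) = x*K" unfolding x_def K_def
    using assms by (intro pow_split) auto
  have x1: "x > 1" unfolding x_def using assms by (simp add: one_less_power)
  have K1: "K \<ge> 1" unfolding K_def using assms by (simp add: one_le_power)
  have p: "x*K - 1 > 0" using x1 K1 by (rule gt1_mult)
  have "(x-1)*K \<le> x*K - 1" using K1 by (simp add: algebra_simps)
  then show ?thesis unfolding rr_def e2 x_def[symmetric] K_def[symmetric]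
    using p by (simp add: divide_le_eq field_simps)
qed

lemma rr_lower:
  assumes "Q \<ge> 2" "a < b" "b \<le> \<mu>"
  shows "1 \<le> rr Q \<mu> a b * Q^(\<mu>-b+1)"
proof -
  define x where "x = Q^(b-a)"
  define K where "K = Q^(\<mu>-b)"
  have e2: "Q^(\<mu>-a) = x*K" unfolding x_def K_def
    using assms by (intro pow_split) auto
  have e3: "Q^(\<mu>-b+1) = K*Q" unfolding K_def by simp
  have xQ: "x \<ge> Q"
  proof -
    have "Q^1 \<le> Q^(b-a)" using assms by (intro power_increasing) auto
    then show ?thesis unfolding x_def by simp
  qed
  have K1: "K \<ge> 1" unfolding K_def using assms by (simp add: one_le_power)
  have p: "x*K - 1 > 0" using xQ K1 assms by (intro gt1_mult) auto
  have "x*K*(Q-1) \<ge> Q*K*(Q-1)" using xQ K1 assms by (intro mult_right_mono) auto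
  moreover have "Q*K*(Q-2) \<ge> 0" using K1 assms by simp
  ultimately have "x*K - 1 \<le> (x-1)*(K*Q)" by (simp add: algebra_simps)
  then show ?thesis unfolding rr_def e2 e3 x_def[symmetric] K_def[symmetric]
    using p by (simp add: le_divide_eq field_simps)
qed

lemma rr_cross:
  assumes "Q \<ge> 2" "ai < bi" "bi < bj" "bj \<le> \<mu>" "1 \<le> aj" "aj \<le> bj"
  shows "rr Q \<mu> ai bi \<le> rr Q \<mu> (aj - 1) bj"
proof -
  have Qp: "Q > 0" "Q > 1" using assms by auto
  have "rr Q \<mu> ai bi \<le> 1 / Q^(\<mu>-bi)"
    using rr_upper[of Q ai bi \<mu>] assms Qp by (simp add: le_divide_eq)
  also have "\<dots> \<le> 1 / Q^(\<mu>-bj+1)"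
    using assms Qp by (intro divide_left_mono power_increasing) auto
  also have "\<dots> \<le> rr Q \<mu> (aj - 1) bj"
    using rr_lower[of Q "aj - 1" bj \<mu>] assms Qp by (simp add: divide_le_eq)
  finally show ?thesis .
qed


definition Inv :: "nat \<Rightarrow> (nat \<Rightarrow> nat) \<Rightarrow> (nat \<Rightarrow> nat) \<Rightarrow> bool" where
  "Inv l wv u \<longleftrightarrow> (\<forall>i. u i \<le> wv i) \<and> (\<forall>i\<ge>l. u i = 0) \<and>
     (\<forall>i j. u i < wv i \<and> 0 < u j \<longrightarrow> wv i < wv j \<or> (wv i = wv j \<and> u j \<le> u i + 1))"

lemma step_props:
  assumes "ucomp_step l wv u u'"
  obtains h where "h < l" "0 < u h" "\<And>j. j < l \<Longrightarrow> 0 < u j \<Longrightarrow> wv h \<le> wv j"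
    "\<And>j. j < l \<Longrightarrow> 0 < u j \<Longrightarrow> wv j = wv h \<Longrightarrow> u j \<le> u h" "u' = u(h := u h - 1)"
proof -
  define J1 where "J1 = {i. i < l \<and> u i > 0}"
  define J2 where "J2 = {i \<in> J1. wv i = Min (wv ` J1)}"
  define J3 where "J3 = {i \<in> J2. u i = Max (u ` J2)}"
  have f1: "finite J1" unfolding J1_def by auto
  have f2: "finite J2" unfolding J2_def using f1 by auto
  from assms obtain h where h: "h \<in> J3" "u' = u(h := u h - 1)"
    unfolding ucomp_step_def Let_def J1_def[symmetric] J2_def[symmetric] J3_def[symmetric] by blast
  have hJ2: "h \<in> J2" using h unfolding J3_def by auto
  have hJ1: "h \<in> J1" using hJ2 unfolding J2_def by auto
  show ?thesis
  proof (rule that)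
    show "h < l" "0 < u h" using hJ1 unfolding J1_def by auto
    show "u' = u(h := u h - 1)" by (rule h(2))
    fix j assume j: "j < l" "0 < u j"
    then have jJ1: "j \<in> J1" unfolding J1_def by auto
    have "wv h = Min (wv ` J1)" using hJ2 unfolding J2_def by auto
    also have "\<dots> \<le> wv j" using f1 jJ1 by (intro Min_le) auto
    finally show "wv h \<le> wv j" .
    assume "wv j = wv h"
    then have "j \<in> J2" using jJ1 hJ2 unfolding J2_def by auto
    then have "u j \<le> Max (u ` J2)" using f2 by (intro Max_ge) auto
    also have "\<dots> = u h" using h(1) unfolding J3_def by auto
    finally show "u j \<le> u h" .
  qed
qed

lemma step_inv:
  assumes "Inv l wv u" "ucomp_step l wv u u'"
  shows "Inv l wv u' \<and> (\<Sum>i<l. u' i) = (\<Sum>i<l. u i) - 1"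
proof -
  obtain h where h: "h < l" "0 < u h" "\<And>j. j < l \<Longrightarrow> 0 < u j \<Longrightarrow> wv h \<le> wv j"
    "\<And>j. j < l \<Longrightarrow> 0 < u j \<Longrightarrow> wv j = wv h \<Longrightarrow> u j \<le> u h" "u' = u(h := u h - 1)"
    using that by (rule step_props[OF assms(2)])
  have c: "(\<forall>i. u i \<le> wv i) \<and> (\<forall>i\<ge>l. u i = 0) \<and>
     (\<forall>i j. u i < wv i \<and> 0 < u j \<longrightarrow> wv i < wv j \<or> (wv i = wv j \<and> u j \<le> u i + 1))"
    using assms(1) unfolding Inv_def .
  have I1: "\<forall>i. u i \<le> wv i" using c by (rule conjunct1)
  have I2: "\<forall>i\<ge>l. u i = 0" using c by simp
  have I3: "\<forall>i j. u i < wv i \<and> 0 < u j \<longrightarrow> wv i < wv j \<or> (wv i = wv j \<and> u j \<le> u i + 1)"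
    using c by simp
  have jl: "j < l" if "0 < u j" for j
  proof (rule ccontr)
    assume "\<not> j < l"
    then have "u j = 0" using I2 by simp
    then show False using that by simp
  qed
  have "Inv l wv u'"
    unfolding Inv_def
  proof (intro conjI allI impI)
    fix i show "u' i \<le> wv i" proof -
      have "u' i \<le> u i" using h(5) by simp
      then show ?thesis using I1 le_trans by blast
    qed
  next
    fix i assume "l \<le> i" then show "u' i = 0" using I2 h(1,5) by auto
  next
    fix i j assume a: "u' i < wv i \<and> 0 < u' j"
    show "wv i < wv j \<or> wv i = wv j \<and> u' j \<le> u' i + 1"
    proof (cases "i = h")
      case True
      show ?thesis
      proof (cases "j = h")
        case True then show ?thesis using \<open>i = h\<close> by auto
      next
        case False
        then have uj: "0 < u j" "u' j = u j" using a h(5) by auto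
        have "wv h \<le> wv j" using h(3)[OF jl[OF uj(1)] uj(1)] .
        moreover have "wv j = wv h \<Longrightarrow> u j \<le> u h" using h(4)[OF jl[OF uj(1)] uj(1)] .
        ultimately show ?thesis using True uj h(2,5) by auto
      qed
    next
      case False
      then have ui: "u' i = u i" using h(5) by auto
      show ?thesis
      proof (cases "j = h")
        case True
        have "0 < u j" using h(2) True by simp
        then show ?thesis using spec[OF spec[OF I3, of i], of j] a ui True h(5) by auto
      next
        case False
        then show ?thesis using spec[OF spec[OF I3, of i], of j] a ui h(5) by auto
      qed
    qed
  qed
  moreover have "(\<Sum>i<l. u' i) = (\<Sum>i<l. u i) - 1"
  proof -
    have "(\<Sum>i<l. u i) = u h + (\<Sum>i\<in>{..<l}-{h}. u i)" using h(1) by (intro sum.remove) auto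
    moreover have "(\<Sum>i<l. u' i) = u' h + (\<Sum>i\<in>{..<l}-{h}. u' i)" using h(1) by (intro sum.remove) auto
    moreover have "(\<Sum>i\<in>{..<l}-{h}. u' i) = (\<Sum>i\<in>{..<l}-{h}. u i)" using h(5) by (intro sum.cong) auto
    ultimately show ?thesis using h(2,5) by simp
  qed
  ultimately show ?thesis by blast
qed

lemma iter_inv:
  assumes "(ucomp_step l wv ^^ k) wv u" "\<forall>i\<ge>l. wv i = 0"
  shows "Inv l wv u \<and> (\<Sum>i<l. u i) = (\<Sum>i<l. wv i) - k"
  using assms(1)
proof (induction k arbitrary: u)
  case 0
  then show ?case using assms(2) by (auto simp: Inv_def)
next
  case (Suc k)
  from Suc.prems obtain y where y: "(ucomp_step l wv ^^ k) wv y" "ucomp_step l wv y u"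
    by (rule relpowp_Suc_E)
  from Suc.IH[OF y(1)] step_inv[OF _ y(2)] show ?case by auto
qed



lemma split2:
  fixes f :: "nat \<Rightarrow> 'a::comm_monoid_mult"
  assumes "i < l" "j < l" "i \<noteq> j"
  shows "(\<Prod>k<l. f k) = f i * f j * (\<Prod>k\<in>{..<l}-{i,j}. f k)"
proof -
  have "(\<Prod>k<l. f k) = f i * (\<Prod>k\<in>{..<l}-{i}. f k)" using assms by (intro prod.remove) auto
  also have "(\<Prod>k\<in>{..<l}-{i}. f k) = f j * (\<Prod>k\<in>{..<l}-{i}-{j}. f k)"
    using assms by (intro prod.remove) auto
  also have "{..<l}-{i}-{j} = {..<l}-{i,j}" by auto
  finally show ?thesis by (simp add: mult.assoc)
qed

lemma sum2:
  fixes f :: "nat \<Rightarrow> nat"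
  assumes "i < l" "j < l" "i \<noteq> j"
  shows "(\<Sum>k<l. f k) = f i + f j + (\<Sum>k\<in>{..<l}-{i,j}. f k)"
proof -
  have "(\<Sum>k<l. f k) = f i + (\<Sum>k\<in>{..<l}-{i}. f k)" using assms by (intro sum.remove) auto
  also have "(\<Sum>k\<in>{..<l}-{i}. f k) = f j + (\<Sum>k\<in>{..<l}-{i}-{j}. f k)"
    using assms by (intro sum.remove) auto
  also have "{..<l}-{i}-{j} = {..<l}-{i,j}" by auto
  finally show ?thesis by (simp add: add.assoc)
qed

lemma keyP:
  assumes Q: "Q \<ge> 2" and I: "Inv l wv us" and wmu: "\<forall>i<l. wv i \<le> \<mu>"
    and i: "i < l" "us i < wv i" and j: "j < l" "0 < us j"
  shows "rr Q \<mu> (us i) (wv i) \<le> rr Q \<mu> (us j - 1) (wv j)"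
proof -
  have c: "wv i < wv j \<or> (wv i = wv j \<and> us j \<le> us i + 1)"
    using I i j unfolding Inv_def by blast
  have uw: "us j \<le> wv j" using I unfolding Inv_def by blast
  show ?thesis
  proof (cases "wv i < wv j")
    case True
    then show ?thesis using rr_cross[OF Q i(2) True] wmu j uw by auto
  next
    case False
    then have "wv i = wv j" "us j \<le> us i + 1" using c by auto
    then show ?thesis using rr_mono[of Q "us j - 1" "us i" "wv i" \<mu>] Q i wmu by auto
  qed
qed

lemma exch:
  assumes Q: "Q \<ge> 2" and I: "Inv l wv us" and wmu: "\<forall>i<l. wv i \<le> \<mu>"
  shows "\<forall>v. (\<forall>i<l. v i \<le> wv i) \<longrightarrow> (\<Sum>i<l. v i) = (\<Sum>i<l. us i) \<longrightarrow>
     (\<Sum>k<l. (v k - us k) + (us k - v k)) = n \<longrightarrow> phi' Q \<mu> l v wv \<le> phi' Q \<mu> l us wv"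
proof (induction n rule: less_induct)
  case (less n)
  show ?case
  proof (intro allI impI)
    fix v assume vw: "\<forall>i<l. v i \<le> wv i" and vs: "(\<Sum>i<l. v i) = (\<Sum>i<l. us i)"
      and vn: "(\<Sum>k<l. (v k - us k) + (us k - v k)) = n"
    have Q1: "Q > 1" using Q by simp
    have usw: "\<forall>i. us i \<le> wv i" using I unfolding Inv_def by blast
    show "phi' Q \<mu> l v wv \<le> phi' Q \<mu> l us wv"
    proof (cases "\<forall>k<l. v k = us k")
      case True
      then have "(\<Prod>i<l. Phi Q \<mu> (v i) (wv i)) = (\<Prod>i<l. Phi Q \<mu> (us i) (wv i))"
        by (intro prod.cong) auto
      then show ?thesis unfolding phi'_def by simp
    next
      case False
      then obtain k where k: "k < l" "v k \<noteq> us k" by blast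
      have "\<exists>i<l. us i < v i"
      proof (rule ccontr)
        assume nt: "\<not> ?thesis"
        then have "\<forall>i\<in>{..<l}. v i \<le> us i" by auto
        moreover have "\<exists>i\<in>{..<l}. v i < us i" using k nt by force
        ultimately have "(\<Sum>i<l. v i) < (\<Sum>i<l. us i)" by (intro sum_strict_mono_ex1) auto
        then show False using vs by simp
      qed
      then obtain i where i: "i < l" "us i < v i" by blast
      have "\<exists>j<l. v j < us j"
      proof (rule ccontr)
        assume "\<not> ?thesis"
        then have "\<forall>j\<in>{..<l}. us j \<le> v j" by auto
        moreover have "\<exists>j\<in>{..<l}. us j < v j" using i by force
        ultimately have "(\<Sum>i<l. us i) < (\<Sum>i<l. v i)" by (intro sum_strict_mono_ex1) auto
        then show False using vs by simp
      qed
      then obtain j where j: "j < l" "v j < us j" by blast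
      have ij: "i \<noteq> j" using i j by auto
      define v' where "v' = v(i := v i - 1, j := v j + 1)"
      have v'i: "v' i = v i - 1" and v'j: "v' j = v j + 1" unfolding v'_def using ij by auto
      have v'o: "\<And>k. k \<noteq> i \<Longrightarrow> k \<noteq> j \<Longrightarrow> v' k = v k" unfolding v'_def by auto
      have vjw: "v j < wv j" using j usw by (meson less_le_trans)
      have viw: "us i < wv i" using i vw by (meson less_le_trans)
      have vw': "\<forall>k<l. v' k \<le> wv k"
      proof (intro allI impI)
        fix k assume k: "k < l"
        show "v' k \<le> wv k"
        proof (cases "k = i")
          case True then show ?thesis using v'i vw k by (metis diff_le_self le_trans)
        next
          case False
          show ?thesis
          proof (cases "k = j")
            case True then show ?thesis using v'j vjw by simp
          next
            case False then show ?thesis using v'o \<open>k \<noteq> i\<close> vw k by simp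
          qed
        qed
      qed
      have vs': "(\<Sum>k<l. v' k) = (\<Sum>k<l. us k)"
      proof -
        have "(\<Sum>k<l. v' k) = v' i + v' j + (\<Sum>k\<in>{..<l}-{i,j}. v' k)" by (rule sum2[OF i(1) j(1) ij])
        also have "(\<Sum>k\<in>{..<l}-{i,j}. v' k) = (\<Sum>k\<in>{..<l}-{i,j}. v k)"
          using v'o by (intro sum.cong) auto
        also have "v' i + v' j = v i + v j" using v'i v'j i by simp
        also have "v i + v j + (\<Sum>k\<in>{..<l}-{i,j}. v k) = (\<Sum>k<l. v k)"
          by (rule sum2[OF i(1) j(1) ij, symmetric])
        finally show ?thesis using vs by simp
      qed
      have dlt: "(\<Sum>k<l. (v' k - us k) + (us k - v' k)) < n"
        unfolding vn[symmetric]
      proof (rule sum_strict_mono_ex1)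
        show "\<forall>k\<in>{..<l}. v' k - us k + (us k - v' k) \<le> v k - us k + (us k - v k)"
        proof
          fix k assume "k \<in> {..<l}"
          show "v' k - us k + (us k - v' k) \<le> v k - us k + (us k - v k)"
          proof (cases "k = i")
            case True then show ?thesis using v'i i by auto
          next
            case False then show ?thesis using v'j j v'o by (cases "k = j") auto
          qed
        qed
        show "\<exists>k\<in>{..<l}. v' k - us k + (us k - v' k) < v k - us k + (us k - v k)"
          using v'i i by (intro bexI[of _ i]) auto
      qed simp
      have ih: "phi' Q \<mu> l v' wv \<le> phi' Q \<mu> l us wv"
        using less.IH[OF dlt] vw' vs' by blast
      let ?R = "\<Prod>k\<in>{..<l}-{i,j}. Phi Q \<mu> (v k) (wv k)"
      have R: "?R \<ge> 0" using wmu Q1 by (intro prod_nonneg) (auto intro: Phi_nonneg)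
      have pv: "phi' Q \<mu> l v wv = Phi Q \<mu> (v i) (wv i) * Phi Q \<mu> (v j) (wv j) * ?R"
        unfolding phi'_def by (rule split2[OF i(1) j(1) ij])
      have pv': "phi' Q \<mu> l v' wv = Phi Q \<mu> (v' i) (wv i) * Phi Q \<mu> (v' j) (wv j) * ?R"
      proof -
        have "(\<Prod>k\<in>{..<l}-{i,j}. Phi Q \<mu> (v' k) (wv k)) = ?R"
          by (intro prod.cong) (auto simp: v'o)
        then show ?thesis unfolding phi'_def by (simp add: split2[OF i(1) j(1) ij])
      qed
      have vi: "v i = Suc (v i - 1)" using i by simp
      have Pi: "Phi Q \<mu> (v i) (wv i) = Phi Q \<mu> (v i - 1) (wv i) * rr Q \<mu> (v i - 1) (wv i)"
      proof -
        have "v i \<le> wv i" using vw i by auto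
        then have a: "v i - 1 < wv i" using i(2) by linarith
        have "wv i \<le> \<mu>" using wmu i by auto
        from Phi_Suc[OF Q1 a this] vi show ?thesis by simp
      qed
      have Pj: "Phi Q \<mu> (v j + 1) (wv j) = Phi Q \<mu> (v j) (wv j) * rr Q \<mu> (v j) (wv j)"
        using Phi_Suc[OF Q1 vjw, of \<mu>] wmu j(1) by simp
      have r1: "rr Q \<mu> (v i - 1) (wv i) \<le> rr Q \<mu> (us i) (wv i)"
        using rr_mono[OF Q1, of "us i" "v i - 1" "wv i" \<mu>] i vw wmu by auto
      have r2: "rr Q \<mu> (us i) (wv i) \<le> rr Q \<mu> (us j - 1) (wv j)"
        using keyP[OF Q I wmu i(1) viw j(1)] j(2) by simp
      have r3: "rr Q \<mu> (us j - 1) (wv j) \<le> rr Q \<mu> (v j) (wv j)"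
      proof -
        have "us j \<le> wv j" using usw by auto
        then have a: "us j - 1 < wv j" using j(2) by linarith
        have b: "v j \<le> us j - 1" using j(2) by linarith
        have "wv j \<le> \<mu>" using wmu j by auto
        from rr_mono[OF Q1 b a this] show ?thesis .
      qed
      have A: "Phi Q \<mu> (v i - 1) (wv i) \<ge> 0" "Phi Q \<mu> (v j) (wv j) \<ge> 0"
        using Phi_nonneg Q1 wmu i j by auto
      have "phi' Q \<mu> l v wv = (Phi Q \<mu> (v i - 1) (wv i) * Phi Q \<mu> (v j) (wv j) * ?R) * rr Q \<mu> (v i - 1) (wv i)"
        using pv Pi by (simp add: ac_simps)
      also have "\<dots> \<le> (Phi Q \<mu> (v i - 1) (wv i) * Phi Q \<mu> (v j) (wv j) * ?R) * rr Q \<mu> (v j) (wv j)"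
        using r1 r2 r3 A R by (intro mult_left_mono) auto
      also have "\<dots> = phi' Q \<mu> l v' wv"
        using pv' v'i v'j Pj by (simp add: ac_simps)
      finally show ?thesis using ih by simp
    qed
  qed
qed

theorem mainTheorem8:
  fixes q l \<mu> w u :: nat and wv us :: "nat \<Rightarrow> nat"
  assumes "\<exists>p k. prime p \<and> k \<ge> 1 \<and> q = p ^ k"
    and "l \<ge> 1" and "\<mu> \<ge> 1"
    and "wv \<in> Wset w l \<mu>"
    and "u \<le> w"
    and "ucomp_output l wv w u us"
  shows "us \<in> Wset u l \<mu> \<and>
         phi' (real q) \<mu> l us wv = Max ((\<lambda>v. phi' (real q) \<mu> l v wv) ` Wset u l \<mu>)"
proof -
  obtain p k where pk: "prime p" "k \<ge> 1" "q = p ^ k" using assms(1) by blast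
  have "p \<ge> 2" using pk(1) prime_ge_2_nat by blast
  then have "q \<ge> 2" using pk by (metis le_trans self_le_power not_one_le_zero  less_le_trans order.strict_iff_not one_le_numeral nat_less_le zero_less_iff_neq_zero) 
  then have Q: "real q \<ge> 2" by simp
  have W: "\<forall>i<l. wv i \<le> \<mu>" "\<forall>i\<ge>l. wv i = 0" "(\<Sum>i<l. wv i) = w"
    using assms(4) unfolding Wset_def by auto
  have it: "Inv l wv us \<and> (\<Sum>i<l. us i) = (\<Sum>i<l. wv i) - (w - u)"
    using iter_inv[OF assms(6)[unfolded ucomp_output_def] W(2)] .
  have I: "Inv l wv us" using it by blast
  have su: "(\<Sum>i<l. us i) = u" using it W(3) assms(5) by simp
  have usw: "\<forall>i. us i \<le> wv i" "\<forall>i\<ge>l. us i = 0" using I unfolding Inv_def by blast+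
  have usW: "us \<in> Wset u l \<mu>" unfolding Wset_def using usw su W(1) by (auto intro: le_trans[OF spec[OF usw(1)]])
  have fin: "finite (Wset u l \<mu>)"
  proof (rule finite_subset)
    show "Wset u l \<mu> \<subseteq> {f. \<forall>x. (x \<in> {..<l} \<longrightarrow> f x \<in> {..\<mu>}) \<and> (x \<notin> {..<l} \<longrightarrow> f x = 0)}"
      unfolding Wset_def by auto
    show "finite {f. \<forall>x. (x \<in> {..<l} \<longrightarrow> f x \<in> {..\<mu>}) \<and> (x \<notin> {..<l} \<longrightarrow> (f x::nat) = 0)}"
      by (intro finite_set_of_finite_funs) auto
  qed
  have Q1: "real q > 1" using Q by simp
  have nn: "phi' (real q) \<mu> l us wv \<ge> 0"
    unfolding phi'_def using W(1) Q1 by (intro prod_nonneg) (auto intro: Phi_nonneg)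
  have "Max ((\<lambda>v. phi' (real q) \<mu> l v wv) ` Wset u l \<mu>) = phi' (real q) \<mu> l us wv"
  proof (rule Max_eqI)
    show "finite ((\<lambda>v. phi' (real q) \<mu> l v wv) ` Wset u l \<mu>)" using fin by simp
    show "phi' (real q) \<mu> l us wv \<in> (\<lambda>v. phi' (real q) \<mu> l v wv) ` Wset u l \<mu>" using usW by simp
    fix y assume "y \<in> (\<lambda>v. phi' (real q) \<mu> l v wv) ` Wset u l \<mu>"
    then obtain v where v: "v \<in> Wset u l \<mu>" "y = phi' (real q) \<mu> l v wv" by blast
    have vs: "(\<Sum>i<l. v i) = (\<Sum>i<l. us i)" using v(1) su unfolding Wset_def by simp
    show "y \<le> phi' (real q) \<mu> l us wv"
    proof (cases "\<forall>i<l. v i \<le> wv i")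
      case True
      then show ?thesis using exch[OF Q I W(1)] vs v(2) by blast
    next
      case False
      then obtain i where "i < l" "\<not> v i \<le> wv i" by blast
      then have "phi' (real q) \<mu> l v wv = 0" unfolding phi'_def
        by (intro prod_zero) (auto simp: Phi_def intro!: bexI[of _ i])
      then show ?thesis using v(2) nn by simp
    qed
  qed
  then show ?thesis using usW by simp
qed

end
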